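(* Let $f\in\mathcal{H}^2_{\omega}$ and, for $k\geq1$ and $\lambda\in\mathbb{C}$, $g_{k,\lambda}(z)=z^k+\lambda$. Then $f$ is $\mathcal{H}^2_{\omega}$-inner if and only if for every integer $k\geq 1$ there exist constants $C_k,D_k$ such that $$D_k+|\lambda|^2\leq\|fg_{k,\lambda}\|^2\leq C_k+|\lambda|^2\quad\text{for all }\lambda\in\mathbb{C}.$$
   Context: Let $\omega=\{\omega_n\}_{n\geq 0}$ be a sequence of positive reals with $\omega_0=1$ and $\lim_{n\to\infty}\omega_{n+1}/\omega_n=1$. $\mathcal{H}^2_{\omega}$ is the Hilbert space of power series $f(z)=\sum_{n\ge0}a_nz^n$ with $\|f\|^2=\sum_{n\geq0}\omega_n|a_n|^2<\infty$ and inner product $\langle f,g\rangle=\sum_n\omega_na_n\overline{b_n}$ for $g=\sum b_nz^n$. A function $f\in\mathcal{H}^2_{\omega}$ is $\mathcal{H}^2_{\omega}$-inner if $\|f\|=1$ and $\langle z^mf,f\rangle=0$ for all integers $m\geq1$. *)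

theory Defs
  imports "HOL-Analysis.Analysis" "HOL-Computational_Algebra.Formal_Power_Series"
begin

definition admissible_weight :: "(nat \<Rightarrow> real) \<Rightarrow> bool" where
  "admissible_weight \<omega> \<longleftrightarrow> \<omega> 0 = 1 \<and> (\<forall>n. \<omega> n > 0) \<and>
     (\<lambda>n. \<omega> (Suc n) / \<omega> n) \<longlonglongrightarrow> 1"

definition in_H2w :: "(nat \<Rightarrow> real) \<Rightarrow> complex fps \<Rightarrow> bool" where
  "in_H2w \<omega> f \<longleftrightarrow> summable (\<lambda>n. \<omega> n * (cmod (fps_nth f n))\<^sup>2)"

definition H2w_inner :: "(nat \<Rightarrow> real) \<Rightarrow> complex fps \<Rightarrow> complex fps \<Rightarrow> complex" where
  "H2w_inner \<omega> f g = (\<Sum>n. complex_of_real (\<omega> n) * fps_nth f n * cnj (fps_nth g n))"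

definition H2w_norm :: "(nat \<Rightarrow> real) \<Rightarrow> complex fps \<Rightarrow> real" where
  "H2w_norm \<omega> f = sqrt (\<Sum>n. \<omega> n * (cmod (fps_nth f n))\<^sup>2)"

definition H2w_inner_fn :: "(nat \<Rightarrow> real) \<Rightarrow> complex fps \<Rightarrow> bool" where
  "H2w_inner_fn \<omega> f \<longleftrightarrow> H2w_norm \<omega> f = 1 \<and>
     (\<forall>m::nat. m \<ge> 1 \<longrightarrow> H2w_inner \<omega> (fps_X ^ m * f) f = 0)"

end

theory Submission
  imports Defs
begin

lemma pt_id: "(cmod (a + c * b))\<^sup>2 = (cmod a)\<^sup>2 + (cmod c)\<^sup>2 * (cmod b)\<^sup>2 + 2 * Re (cnj c * (a * cnj b))"
proof -
  have "(cmod c)\<^sup>2 * (cmod b)\<^sup>2 = (cmod (c*b))\<^sup>2" by (simp add: norm_mult power_mult_distrib)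
  then show ?thesis unfolding cmod_power2 by (simp add: power2_eq_square algebra_simps)
qed
lemma xy_le: "x * y \<le> x^2 + (y::real)^2"
proof -
  have "0 \<le> (x - y)^2" "0 \<le> x^2" "0 \<le> y^2" by simp_all
  then show ?thesis unfolding power2_diff by linarith
qed

lemma ratio_bound:
  assumes "admissible_weight \<omega>"
  shows "\<exists>B>0. \<forall>n k. \<omega> (n + k) \<le> B ^ k * \<omega> n"
proof -
  have pos: "\<And>n. \<omega> n > 0" using assms by (simp add: admissible_weight_def)
  have "convergent (\<lambda>n. \<omega> (Suc n) / \<omega> n)" using assms unfolding admissible_weight_def convergent_def by blast
  then have "Bseq (\<lambda>n. \<omega> (Suc n) / \<omega> n)" by (rule convergent_imp_Bseq)
  then obtain B where B: "B > 0" "\<And>n. norm (\<omega> (Suc n) / \<omega> n) \<le> B" by (auto simp: Bseq_def)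
  have step: "\<omega> (Suc n) \<le> B * \<omega> n" for n
  proof -
    have "\<omega> (Suc n) / \<omega> n \<le> B" using B(2)[of n] pos[of n] pos[of "Suc n"] by simp
    thus ?thesis using pos[of n] by (simp add: divide_le_eq)
  qed
  have "\<omega> (n + k) \<le> B ^ k * \<omega> n" for n k
  proof (induction k)
    case 0 then show ?case by simp
  next
    case (Suc k)
    have "\<omega> (n + Suc k) \<le> B * \<omega> (n + k)" using step[of "n+k"] by simp
    also have "\<dots> \<le> B * (B ^ k * \<omega> n)" using Suc B(1) by simp
    finally show ?case by (simp add: algebra_simps)
  qed
  thus ?thesis using B(1) by blast
qed

lemma shift_summable:
  assumes "admissible_weight \<omega>" "in_H2w \<omega> f"
  shows "in_H2w \<omega> (fps_X ^ k * f)"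
proof -
  obtain B where B: "B > 0" "\<And>n k. \<omega> (n + k) \<le> B ^ k * \<omega> n" using ratio_bound[OF assms(1)] by blast
  have s: "summable (\<lambda>n. \<omega> n * (cmod (fps_nth f n))\<^sup>2)" using assms(2) by (simp add: in_H2w_def)
  have "summable (\<lambda>m. \<omega> (m + k) * (cmod (fps_nth f m))\<^sup>2)"
  proof (rule summable_comparison_test[OF _ summable_mult[OF s, of "B^k"]])
    show "\<exists>N. \<forall>n\<ge>N. norm (\<omega> (n + k) * (cmod (fps_nth f n))\<^sup>2) \<le> B ^ k * (\<omega> n * (cmod (fps_nth f n))\<^sup>2)"
    proof (intro exI allI impI)
      fix n
      have "0 \<le> \<omega> (n+k)" using assms(1) by (simp add: admissible_weight_def less_imp_le)
      then have "norm (\<omega> (n + k) * (cmod (fps_nth f n))\<^sup>2) = \<omega> (n + k) * (cmod (fps_nth f n))\<^sup>2" by simp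
      also have "\<dots> \<le> B ^ k * \<omega> n * (cmod (fps_nth f n))\<^sup>2" by (rule mult_right_mono[OF B(2)]) simp
      finally show "norm (\<omega> (n + k) * (cmod (fps_nth f n))\<^sup>2) \<le> B ^ k * (\<omega> n * (cmod (fps_nth f n))\<^sup>2)" by simp
    qed
  qed
  then have "summable (\<lambda>m. \<omega> (m + k) * (cmod (fps_nth (fps_X ^ k * f) (m + k)))\<^sup>2)"
    by (simp add: fps_X_power_mult_nth)
  then show ?thesis unfolding in_H2w_def by (rule summable_iff_shift[THEN iffD1])
qed

lemma expand:
  assumes "\<And>n. \<omega> n \<ge> 0"
    and sa: "summable (\<lambda>n. \<omega> n * (cmod (a n))\<^sup>2)" and sb: "summable (\<lambda>n. \<omega> n * (cmod (b n))\<^sup>2)"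
  shows "0 \<le> (\<Sum>n. \<omega> n * (cmod (a n + c * b n))\<^sup>2) \<and> (\<Sum>n. \<omega> n * (cmod (a n + c * b n))\<^sup>2) = (\<Sum>n. \<omega> n * (cmod (a n))\<^sup>2) + (cmod c)\<^sup>2 * (\<Sum>n. \<omega> n * (cmod (b n))\<^sup>2)
      + 2 * Re (cnj c * (\<Sum>n. complex_of_real (\<omega> n) * a n * cnj (b n)))"
proof -
  have sx: "summable (\<lambda>n. complex_of_real (\<omega> n) * a n * cnj (b n))"
  proof (rule summable_comparison_test[OF _ summable_add[OF sa sb]])
    show "\<exists>N. \<forall>n\<ge>N. norm (complex_of_real (\<omega> n) * a n * cnj (b n)) \<le> \<omega> n * (cmod (a n))\<^sup>2 + \<omega> n * (cmod (b n))\<^sup>2"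
    proof (intro exI allI impI)
      fix n
      have "cmod (a n) * cmod (b n) \<le> (cmod (a n))\<^sup>2 + (cmod (b n))\<^sup>2"
        by (rule xy_le)
      then have "\<omega> n * (cmod (a n) * cmod (b n)) \<le> \<omega> n * ((cmod (a n))\<^sup>2 + (cmod (b n))\<^sup>2)"
        by (rule mult_left_mono[OF _ assms(1)])
      then show "norm (complex_of_real (\<omega> n) * a n * cnj (b n)) \<le> \<omega> n * (cmod (a n))\<^sup>2 + \<omega> n * (cmod (b n))\<^sup>2"
        using assms(1)[of n] by (simp add: norm_mult algebra_simps)
    qed
  qed
  have sx2: "summable (\<lambda>n. 2 * Re (cnj c * (complex_of_real (\<omega> n) * a n * cnj (b n))))"
    using summable_mult[OF summable_Re[OF summable_mult[OF sx, of "cnj c"]], of 2] by simp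
  have eq: "\<And>n. \<omega> n * (cmod (a n + c * b n))\<^sup>2 = \<omega> n * (cmod (a n))\<^sup>2 + (cmod c)\<^sup>2 * (\<omega> n * (cmod (b n))\<^sup>2)
      + 2 * Re (cnj c * (complex_of_real (\<omega> n) * a n * cnj (b n)))"
  proof -
    fix n
    have z: "cnj c * (complex_of_real (\<omega> n) * a n * cnj (b n)) = complex_of_real (\<omega> n) * (cnj c * (a n * cnj (b n)))"
      by (simp only: mult_ac)
    have r: "Re (complex_of_real (\<omega> n) * (cnj c * (a n * cnj (b n)))) = \<omega> n * Re (cnj c * (a n * cnj (b n)))"
      by simp
    show "\<omega> n * (cmod (a n + c * b n))\<^sup>2 = \<omega> n * (cmod (a n))\<^sup>2 + (cmod c)\<^sup>2 * (\<omega> n * (cmod (b n))\<^sup>2)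
      + 2 * Re (cnj c * (complex_of_real (\<omega> n) * a n * cnj (b n)))"
      unfolding z r pt_id by (simp only: distrib_left mult_ac)
  qed
  define X where "X n = \<omega> n * (cmod (a n))\<^sup>2" for n
  define Y where "Y n = \<omega> n * (cmod (b n))\<^sup>2" for n
  define Z where "Z n = complex_of_real (\<omega> n) * a n * cnj (b n)" for n
  have sX: "summable X" using sa by (simp add: X_def[abs_def])
  have sY: "summable Y" using sb by (simp add: Y_def[abs_def])
  have sZ: "summable Z" using sx by (simp add: Z_def[abs_def])
  have eq': "\<omega> n * (cmod (a n + c * b n))\<^sup>2 = X n + (cmod c)\<^sup>2 * Y n + 2 * Re (cnj c * Z n)" for n
    unfolding X_def Y_def Z_def by (rule eq)
  have sR: "summable (\<lambda>n. Re (cnj c * Z n))" by (intro summable_Re summable_mult sZ)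
  have s1: "summable (\<lambda>n. X n + (cmod c)\<^sup>2 * Y n)" by (intro summable_add summable_mult sX sY)
  have s2: "summable (\<lambda>n. 2 * Re (cnj c * Z n))" by (intro summable_mult sR)
  have "summable (\<lambda>n. \<omega> n * (cmod (a n + c * b n))\<^sup>2)"
    unfolding eq' by (intro summable_add s1 s2)
  then have nn: "0 \<le> (\<Sum>n. \<omega> n * (cmod (a n + c * b n))\<^sup>2)"
    using assms(1) by (intro suminf_nonneg) auto
  have e1: "(\<Sum>n. \<omega> n * (cmod (a n + c * b n))\<^sup>2) = (\<Sum>n. X n + (cmod c)\<^sup>2 * Y n) + (\<Sum>n. 2 * Re (cnj c * Z n))"
    unfolding eq' by (rule suminf_add[OF s1 s2, symmetric])
  have e2: "(\<Sum>n. X n + (cmod c)\<^sup>2 * Y n) = (\<Sum>n. X n) + (cmod c)\<^sup>2 * (\<Sum>n. Y n)"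
    by (simp only: suminf_add[OF sX summable_mult[OF sY], symmetric] suminf_mult[OF sY])
  have e3: "(\<Sum>n. 2 * Re (cnj c * Z n)) = 2 * Re (cnj c * (\<Sum>n. Z n))"
    by (simp only: suminf_mult[OF sR] Re_suminf[OF summable_mult[OF sZ], symmetric] suminf_mult[OF sZ])
  have "(\<Sum>n. \<omega> n * (cmod (a n + c * b n))\<^sup>2) = (\<Sum>n. X n) + (cmod c)\<^sup>2 * (\<Sum>n. Y n) + 2 * Re (cnj c * (\<Sum>n. Z n))"
    unfolding e1 e2 e3 ..
  then have "(\<Sum>n. \<omega> n * (cmod (a n + c * b n))\<^sup>2) = (\<Sum>n. \<omega> n * (cmod (a n))\<^sup>2) + (cmod c)\<^sup>2 * (\<Sum>n. \<omega> n * (cmod (b n))\<^sup>2)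
      + 2 * Re (cnj c * (\<Sum>n. complex_of_real (\<omega> n) * a n * cnj (b n)))"
    unfolding X_def Y_def Z_def .
  then show ?thesis by (intro conjI nn)
qed


lemma norm_expand:
  assumes "admissible_weight \<omega>" "in_H2w \<omega> f"
  shows "(H2w_norm \<omega> (f * (fps_X ^ k + fps_const c)))\<^sup>2 =
     (\<Sum>n. \<omega> n * (cmod (fps_nth (fps_X ^ k * f) n))\<^sup>2) + (cmod c)\<^sup>2 * (\<Sum>n. \<omega> n * (cmod (fps_nth f n))\<^sup>2)
      + 2 * Re (cnj c * H2w_inner \<omega> (fps_X ^ k * f) f)"
proof -
  have w: "\<And>n. \<omega> n \<ge> 0" using assms(1) by (simp add: admissible_weight_def less_imp_le)
  have e: "f * (fps_X ^ k + fps_const c) = fps_X ^ k * f + f * fps_const c" by (simp add: algebra_simps)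
  have nth: "\<And>n. fps_nth (f * (fps_X ^ k + fps_const c)) n = fps_nth (fps_X ^ k * f) n + c * fps_nth f n"
    unfolding e by (simp add: mult.commute)
  have sa: "summable (\<lambda>n. \<omega> n * (cmod (fps_nth (fps_X ^ k * f) n))\<^sup>2)"
    using shift_summable[OF assms] by (simp add: in_H2w_def)
  have sb: "summable (\<lambda>n. \<omega> n * (cmod (fps_nth f n))\<^sup>2)" using assms(2) by (simp add: in_H2w_def)
  note ex = expand[OF w sa sb, of c]
  show ?thesis
    unfolding H2w_norm_def H2w_inner_def nth using ex by simp
qed

theorem mainTheorem3:
  fixes \<omega> :: "nat \<Rightarrow> real" and f :: "complex fps"
  assumes "admissible_weight \<omega>" and "in_H2w \<omega> f"
  shows "H2w_inner_fn \<omega> f \<longleftrightarrow>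
    (\<forall>k::nat. k \<ge> 1 \<longrightarrow> (\<exists>C D :: real. \<forall>c::complex.
       D + (cmod c)\<^sup>2 \<le> (H2w_norm \<omega> (f * (fps_X ^ k + fps_const c)))\<^sup>2 \<and>
       (H2w_norm \<omega> (f * (fps_X ^ k + fps_const c)))\<^sup>2 \<le> C + (cmod c)\<^sup>2))"
proof -
  define Bf where "Bf = (\<Sum>n. \<omega> n * (cmod (fps_nth f n))\<^sup>2)"
  define A where "A k = (\<Sum>n. \<omega> n * (cmod (fps_nth (fps_X ^ k * f) n))\<^sup>2)" for k
  define I where "I k = H2w_inner \<omega> (fps_X ^ k * f) f" for k
  have NE: "\<And>k c. (H2w_norm \<omega> (f * (fps_X ^ k + fps_const c)))\<^sup>2 = A k + (cmod c)\<^sup>2 * Bf + 2 * Re (cnj c * I k)"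
    unfolding A_def Bf_def I_def by (rule norm_expand[OF assms])
  have Bnn: "Bf \<ge> 0" unfolding Bf_def using assms
    by (intro suminf_nonneg) (auto simp: in_H2w_def admissible_weight_def less_imp_le)
  have normf: "H2w_norm \<omega> f = sqrt Bf" by (simp add: H2w_norm_def Bf_def)
  show ?thesis
  proof
    assume h: "H2w_inner_fn \<omega> f"
    then have "sqrt Bf = 1" by (simp add: H2w_inner_fn_def normf)
    then have B1: "Bf = 1" using Bnn by simp
    show "\<forall>k::nat. k \<ge> 1 \<longrightarrow> (\<exists>C D :: real. \<forall>c::complex.
       D + (cmod c)\<^sup>2 \<le> (H2w_norm \<omega> (f * (fps_X ^ k + fps_const c)))\<^sup>2 \<and>
       (H2w_norm \<omega> (f * (fps_X ^ k + fps_const c)))\<^sup>2 \<le> C + (cmod c)\<^sup>2)"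
    proof (intro allI impI)
      fix k :: nat assume "k \<ge> 1"
      then have "I k = 0" using h by (simp add: H2w_inner_fn_def I_def)
      then show "\<exists>C D :: real. \<forall>c::complex.
       D + (cmod c)\<^sup>2 \<le> (H2w_norm \<omega> (f * (fps_X ^ k + fps_const c)))\<^sup>2 \<and>
       (H2w_norm \<omega> (f * (fps_X ^ k + fps_const c)))\<^sup>2 \<le> C + (cmod c)\<^sup>2"
        by (intro exI[of _ "A k"]) (simp add: NE B1)
    qed
  next
    assume h: "\<forall>k::nat. k \<ge> 1 \<longrightarrow> (\<exists>C D :: real. \<forall>c::complex.
       D + (cmod c)\<^sup>2 \<le> (H2w_norm \<omega> (f * (fps_X ^ k + fps_const c)))\<^sup>2 \<and>
       (H2w_norm \<omega> (f * (fps_X ^ k + fps_const c)))\<^sup>2 \<le> C + (cmod c)\<^sup>2)"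
    have bnd: "\<exists>C D. \<forall>c. D + (cmod c)\<^sup>2 \<le> A k + (cmod c)\<^sup>2 * Bf + 2 * Re (cnj c * I k) \<and>
        A k + (cmod c)\<^sup>2 * Bf + 2 * Re (cnj c * I k) \<le> C + (cmod c)\<^sup>2" if "k \<ge> 1" for k
      using h that by (simp add: NE)
    have B1: "Bf = 1"
    proof -
      obtain C D where CD: "\<And>c. D + (cmod c)\<^sup>2 \<le> A 1 + (cmod c)\<^sup>2 * Bf + 2 * Re (cnj c * I 1) \<and>
        A 1 + (cmod c)\<^sup>2 * Bf + 2 * Re (cnj c * I 1) \<le> C + (cmod c)\<^sup>2" using bnd[of 1] by auto
      have avg: "D + t\<^sup>2 \<le> A 1 + t\<^sup>2 * Bf \<and> A 1 + t\<^sup>2 * Bf \<le> C + t\<^sup>2" for t :: real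
      proof -
        have r1: "Re (cnj (complex_of_real t) * I 1) = t * Re (I 1)" by simp
        have r2: "Re (cnj (- complex_of_real t) * I 1) = - (t * Re (I 1))" by simp
        have n2: "(cmod (- complex_of_real t))\<^sup>2 = t\<^sup>2" "(cmod (complex_of_real t))\<^sup>2 = t\<^sup>2" by simp_all
        show ?thesis using CD[of "complex_of_real t"] CD[of "- complex_of_real t"] unfolding r1 r2 n2 by linarith
      qed
      show ?thesis
      proof (rule ccontr)
        assume ne: "Bf \<noteq> 1"
        define t where "t = sqrt ((\<bar>A 1 - D\<bar> + \<bar>C - A 1\<bar> + 1) / \<bar>Bf - 1\<bar>)"
        have t2: "t\<^sup>2 = (\<bar>A 1 - D\<bar> + \<bar>C - A 1\<bar> + 1) / \<bar>Bf - 1\<bar>" unfolding t_def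
          by (simp add: real_sqrt_pow2)
        then have "t\<^sup>2 * \<bar>Bf - 1\<bar> = \<bar>A 1 - D\<bar> + \<bar>C - A 1\<bar> + 1" using ne by simp
        moreover have "t\<^sup>2 * (Bf - 1) = t\<^sup>2 * Bf - t\<^sup>2" by (simp add: algebra_simps)
        moreover have "\<bar>Bf - 1\<bar> = Bf - 1 \<or> \<bar>Bf - 1\<bar> = - (Bf - 1)" by linarith
        ultimately show False using avg[of t] by (auto simp: algebra_simps)
      qed
    qed
    have I0: "I k = 0" if k1: "k \<ge> 1" for k
    proof (rule ccontr)
      assume ne: "I k \<noteq> 0"
      obtain C D where CD: "\<And>c. D + (cmod c)\<^sup>2 \<le> A k + (cmod c)\<^sup>2 * Bf + 2 * Re (cnj c * I k) \<and>
        A k + (cmod c)\<^sup>2 * Bf + 2 * Re (cnj c * I k) \<le> C + (cmod c)\<^sup>2" using bnd[of k] k1 by blast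
      then have CD': "D \<le> A k + 2 * Re (cnj c * I k) \<and> A k + 2 * Re (cnj c * I k) \<le> C" for c
        using CD[of c] unfolding B1 mult_1_right by linarith
      have re: "Re (cnj (complex_of_real t * I k) * I k) = t * (cmod (I k))\<^sup>2" for t
        by (simp only: cmod_power2) (simp add: power2_eq_square algebra_simps)
      have pos: "(cmod (I k))\<^sup>2 > 0" using ne by simp
      define t where "t = (\<bar>C\<bar> + \<bar>A k\<bar> + 1) / (2 * (cmod (I k))\<^sup>2)"
      have "2 * (t * (cmod (I k))\<^sup>2) = \<bar>C\<bar> + \<bar>A k\<bar> + 1" unfolding t_def using pos by simp
      then show False using CD'[of "complex_of_real t * I k"] unfolding re by linarith
    qed
    show "H2w_inner_fn \<omega> f" unfolding H2w_inner_fn_def normf B1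
      using I0 by (simp add: I_def)
  qed
qed

end
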